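(* Let $\delta\ge1$, let $d_X\ge d_Y$ be sufficiently large integers, let $\Sigma=X\sqcup Y$ be a $\delta$-approximately $(d_X,d_Y)$-biregular bipartite graph, and let $a,g\in\mathbb N$ with $t:=g-a>0$ and $w:=gd_Y-ad_X$. For any sufficiently large absolute constant $\gamma$ the following holds. Fix $1\le\varphi\le d_Y/\delta-1$ and fix $F'\subseteq Y$; let $\mathcal G(a,g,F')$ be the set of $A\in\mathcal G(a,g)$ for which $F'$ is a $\varphi$-approximation. Let $\kappa=\max\{i: 2^i\le\sqrt{d_X}\}$. Then there exists a family $\mathcal F=\mathcal F(a,g,F')\subseteq 2^Y\times 2^X$ such that: (1) $\mathcal F=\bigcup_{i\in[0,\kappa]}\mathcal F_i$ where for each $i\in[0,\kappa]$, \[|\mathcal F_i|\le\binom{d_Yg}{\le\frac{\delta\gamma w}{(d_Y-\delta\varphi)d_X}}\binom{\delta^2d_X^2d_Y^2g}{\le\frac{2\gamma w}{d_Xd_Y}}\exp\left[O\left(\frac{it\gamma\log(gd_X^2/t)}{d_X}\right)\right],\] where the implicit constant in $O(\cdot)$ does not depend on $i$, $a$, $g$, $F'$; (2) if $(F,S)\in\mathcal F_i$, then $(F,S)$ is a $(d_X/(2^i\gamma),d_Y/\gamma)$-approximating pair for some $A\in\mathcal G(a,g,F')$; moreover, for $i\in[0,\kappa-1]$, every $(F,S)\in\mathcal F_i$ satisfies $|F|<g-t/2^i$; (3) every $A\in\mathcal G(a,g,F')$ has a $(d_X/(2^i\gamma),d_Y/\gamma)$-approximating pair in $\mathcal F_i$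 for some $i\in[0,\kappa]$.
   Context: A bipartite graph $\Sigma$ with parts $X,Y$ is $\delta$-approximately $(d_X,d_Y)$-biregular ($d_Y\le d_X$) if every $v\in X$ has degree $d(v)\in[d_X,\delta d_X]$ and every $v\in Y$ has degree $d(v)\in[\delta^{-1}d_Y,d_Y]$. $N(S)$ denotes the set of neighbours of $S$; $d_B(x)=|N(x)\cap B|$. For $A\subseteq X$, $[A]=\{x\in X:N(x)\subseteq N(A)\}$. A set is 2-linked if it induces a connected subgraph of $\Sigma^2$ (vertices adjacent iff at distance at most 2 in $\Sigma$). $\mathcal G(a,g)=\{A\subseteq X\text{ 2-linked}:|[A]|=a,|N(A)|=g\}$. For $A\subseteq X$, $N(A)^\varphi=\{y\in N(A):d_{[A]}(y)>\varphi\}$; a $\varphi$-approximation for $A$ is $F\subseteq Y$ with $N(A)^\varphi\subseteq F\subseteq N(A)$ and $N(F)\supseteq[A]$. A $(\psi_X,\psi_Y)$-approximating pair for $A\subseteq X$ is $(F,S)\in 2^Y\times 2^X$ with $F\subseteq N(A)$, $S\supseteq[A]$, $d_F(u)\ge d(u)-\psi_X$ for all $u\in S$, and $d_{X\setminus S}(v)\ge d(v)-\psi_Y$ for all $v\in Y\setminus F$. $\binom{n}{\le k}=\sum_{i\le k}\binom ni$; $\log$ is natural logarithm. *)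

theory Defs
  imports Complex_Main
begin

definition bipartite :: "'v set \<Rightarrow> 'v set \<Rightarrow> ('v \<Rightarrow> 'v \<Rightarrow> bool) \<Rightarrow> bool" where
  "bipartite X Y adj \<longleftrightarrow> finite X \<and> finite Y \<and> X \<inter> Y = {} \<and>
     (\<forall>u v. adj u v \<longrightarrow> adj v u) \<and>
     (\<forall>u v. adj u v \<longrightarrow> (u \<in> X \<and> v \<in> Y) \<or> (u \<in> Y \<and> v \<in> X))"

definition nbhd :: "('v \<Rightarrow> 'v \<Rightarrow> bool) \<Rightarrow> 'v \<Rightarrow> 'v set" where
  "nbhd adj v = {u. adj v u}"

definition deg :: "('v \<Rightarrow> 'v \<Rightarrow> bool) \<Rightarrow> 'v \<Rightarrow> nat" where
  "deg adj v = card (nbhd adj v)"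

definition degin :: "('v \<Rightarrow> 'v \<Rightarrow> bool) \<Rightarrow> 'v set \<Rightarrow> 'v \<Rightarrow> nat" where
  "degin adj B x = card (nbhd adj x \<inter> B)"

definition NS :: "('v \<Rightarrow> 'v \<Rightarrow> bool) \<Rightarrow> 'v set \<Rightarrow> 'v set" where
  "NS adj S = (\<Union>v\<in>S. nbhd adj v)"

definition approx_biregular ::
  "'v set \<Rightarrow> 'v set \<Rightarrow> ('v \<Rightarrow> 'v \<Rightarrow> bool) \<Rightarrow> real \<Rightarrow> nat \<Rightarrow> nat \<Rightarrow> bool" where
  "approx_biregular X Y adj \<delta> dX dY \<longleftrightarrow> bipartite X Y adj \<and> dY \<le> dX \<and>
     (\<forall>v\<in>X. real dX \<le> real (deg adj v) \<and> real (deg adj v) \<le> \<delta> * real dX) \<and>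
     (\<forall>v\<in>Y. real dY / \<delta> \<le> real (deg adj v) \<and> real (deg adj v) \<le> real dY)"

definition clos :: "'v set \<Rightarrow> ('v \<Rightarrow> 'v \<Rightarrow> bool) \<Rightarrow> 'v set \<Rightarrow> 'v set" where
  "clos X adj A = {x\<in>X. nbhd adj x \<subseteq> NS adj A}"

definition adj2 :: "('v \<Rightarrow> 'v \<Rightarrow> bool) \<Rightarrow> 'v \<Rightarrow> 'v \<Rightarrow> bool" where
  "adj2 adj u v \<longleftrightarrow> u \<noteq> v \<and> (adj u v \<or> (\<exists>w. adj u w \<and> adj w v))"

definition two_linked :: "('v \<Rightarrow> 'v \<Rightarrow> bool) \<Rightarrow> 'v set \<Rightarrow> bool" where
  "two_linked adj A \<longleftrightarrow>
     (\<forall>u\<in>A. \<forall>v\<in>A. (u, v) \<in> ({(x, y). x \<in> A \<and> y \<in> A \<and> adj2 adj x y})\<^sup>*)"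

definition Gset :: "'v set \<Rightarrow> ('v \<Rightarrow> 'v \<Rightarrow> bool) \<Rightarrow> nat \<Rightarrow> nat \<Rightarrow> 'v set set" where
  "Gset X adj a g = {A. A \<subseteq> X \<and> two_linked adj A \<and>
      card (clos X adj A) = a \<and> card (NS adj A) = g}"

definition Nphi :: "'v set \<Rightarrow> ('v \<Rightarrow> 'v \<Rightarrow> bool) \<Rightarrow> real \<Rightarrow> 'v set \<Rightarrow> 'v set" where
  "Nphi X adj \<phi> A = {y\<in>NS adj A. real (degin adj (clos X adj A) y) > \<phi>}"

definition phi_approx :: "'v set \<Rightarrow> ('v \<Rightarrow> 'v \<Rightarrow> bool) \<Rightarrow> real \<Rightarrow> 'v set \<Rightarrow> 'v set \<Rightarrow> bool" where
  "phi_approx X adj \<phi> F A \<longleftrightarrow>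
     Nphi X adj \<phi> A \<subseteq> F \<and> F \<subseteq> NS adj A \<and> clos X adj A \<subseteq> NS adj F"

definition GsetF :: "'v set \<Rightarrow> ('v \<Rightarrow> 'v \<Rightarrow> bool) \<Rightarrow> real \<Rightarrow> nat \<Rightarrow> nat \<Rightarrow> 'v set \<Rightarrow> 'v set set" where
  "GsetF X adj \<phi> a g F' = {A\<in>Gset X adj a g. phi_approx X adj \<phi> F' A}"

definition approx_pair ::
  "'v set \<Rightarrow> 'v set \<Rightarrow> ('v \<Rightarrow> 'v \<Rightarrow> bool) \<Rightarrow> real \<Rightarrow> real \<Rightarrow> 'v set \<Rightarrow> 'v set \<Rightarrow> 'v set \<Rightarrow> bool" where
  "approx_pair X Y adj \<psi>X \<psi>Y F S A \<longleftrightarrow>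
     F \<subseteq> NS adj A \<and> clos X adj A \<subseteq> S \<and>
     (\<forall>u\<in>S. real (degin adj F u) \<ge> real (deg adj u) - \<psi>X) \<and>
     (\<forall>v\<in>Y - F. real (degin adj (X - S) v) \<ge> real (deg adj v) - \<psi>Y)"

text \<open>binom(n, \<le> k) = sum over i \<le> k of (n choose i); generalized binomial
  coefficient since n may be a non-integer real.\<close>
definition binom_le :: "real \<Rightarrow> real \<Rightarrow> real" where
  "binom_le n k = (\<Sum>i\<in>{i::nat. real i \<le> k}. n gchoose i)"

definition kappa :: "nat \<Rightarrow> nat" where
  "kappa dX = (GREATEST i::nat. (2::real) ^ i \<le> sqrt (real dX))"

end

theory Submission
  imports Defs
begin


lemma greedy:
  fixes f :: "'a \<Rightarrow> 'b set" and \<tau> :: real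
  assumes "finite Q" "\<tau> \<ge> 0"
  shows "\<exists>T \<subseteq> I. finite T \<and> real (card T) * \<tau> \<le> real (card Q) - real (card (Q - \<Union>(f ` T)))
     \<and> (\<forall>x\<in>I. real (card (f x \<inter> (Q - \<Union>(f ` T)))) \<le> \<tau>) \<and> (\<forall>x\<in>T. f x \<inter> Q \<noteq> {})"
  using assms(1)
proof (induction "card Q" arbitrary: Q rule: less_induct)
  case less
  show ?case
  proof (cases "\<forall>x\<in>I. real (card (f x \<inter> Q)) \<le> \<tau>")
    case True
    then show ?thesis by (intro exI[of _ "{}"]) auto
  next
    case False
    then obtain x where x: "x \<in> I" "real (card (f x \<inter> Q)) > \<tau>" by auto
    hence ne: "f x \<inter> Q \<noteq> {}" using assms(2) by (metis card.empty of_nat_0 not_less)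
    define Q' where "Q' = Q - f x"
    have fin': "finite Q'" using less.prems Q'_def by auto
    have QU: "Q = Q' \<union> (f x \<inter> Q)" "Q' \<inter> (f x \<inter> Q) = {}" using Q'_def by auto
    have cardQ: "card Q = card Q' + card (f x \<inter> Q)"
      using card_Un_disjoint[OF fin', of "f x \<inter> Q"] QU less.prems by auto
    have "card (f x \<inter> Q) > 0" using ne less.prems by (simp add: card_gt_0_iff)
    hence lt: "card Q' < card Q" using cardQ by auto
    obtain T' where T': "T' \<subseteq> I" "finite T'"
      "real (card T') * \<tau> \<le> real (card Q') - real (card (Q' - \<Union>(f ` T')))"
      "\<forall>x\<in>I. real (card (f x \<inter> (Q' - \<Union>(f ` T')))) \<le> \<tau>" "\<forall>x\<in>T'. f x \<inter> Q' \<noteq> {}"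
      using less.hyps[OF lt fin'] by blast
    have eq: "Q - \<Union>(f ` insert x T') = Q' - \<Union>(f ` T')" using Q'_def by auto
    have ci: "real (card (insert x T')) \<le> real (card T') + 1"
      using card_insert_le_m1[of "Suc (card T')" T' x] by linarith
    have "real (card (insert x T')) * \<tau> \<le> (real (card T') + 1) * \<tau>"
      using ci assms(2) by (simp add: mult_right_mono)
    also have "\<dots> \<le> real (card Q') - real (card (Q' - \<Union>(f ` T'))) + real (card (f x \<inter> Q))"
      using T'(3) x(2) by (simp add: algebra_simps)
    also have "\<dots> = real (card Q) - real (card (Q - \<Union>(f ` insert x T')))"
      using cardQ eq by simp
    finally show ?thesis
      using T' x ne eq Q'_def by (intro exI[of _ "insert x T'"]) auto
  qed
qed

lemma finite_nat_le_real: "finite {j::nat. real j \<le> k}"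
proof (rule finite_subset[of _ "{..nat \<lceil>k\<rceil>}"])
  show "{j::nat. real j \<le> k} \<subseteq> {..nat \<lceil>k\<rceil>}"
  proof
    fix j assume "j \<in> {j::nat. real j \<le> k}"
    hence "real j \<le> k" by simp
    hence "int j \<le> \<lceil>k\<rceil>" by linarith
    thus "j \<in> {..nat \<lceil>k\<rceil>}" by simp
  qed
qed simp

lemma card_subsets_le:
  assumes "finite U"
  shows "card {T. T \<subseteq> U \<and> real (card T) \<le> k} = (\<Sum>j\<in>{j::nat. real j \<le> k}. card U choose j)"
proof -
  have eq: "{T. T \<subseteq> U \<and> real (card T) \<le> k} = (\<Union>j\<in>{j::nat. real j \<le> k}. {T. T \<subseteq> U \<and> card T = j})"
    by auto
  have "card (\<Union>j\<in>{j::nat. real j \<le> k}. {T. T \<subseteq> U \<and> card T = j})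
        = (\<Sum>j\<in>{j::nat. real j \<le> k}. card {T. T \<subseteq> U \<and> card T = j})"
    by (rule card_UN_disjoint[OF finite_nat_le_real]) (use assms in auto)
  thus ?thesis using eq n_subsets[OF assms] by simp
qed

lemma choose_le_gchoose:
  fixes n :: real
  assumes "real m \<le> n" "real j \<le> n + 1"
  shows "real (m choose j) \<le> n gchoose j"
proof (cases "j \<le> m")
  case True
  have "real (m choose j) = (\<Prod>i=0..<j. real m - of_nat i) / fact j"
    by (simp add: binomial_gbinomial gbinomial_prod_rev)
  also have "\<dots> \<le> (\<Prod>i=0..<j. n - of_nat i) / fact j"
    by (intro divide_right_mono prod_mono) (use True assms in auto)
  also have "\<dots> = n gchoose j" by (simp add: gbinomial_prod_rev)
  finally show ?thesis .
next
  case False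
  hence "m choose j = 0" by simp
  hence z: "real (m choose j) = 0" by simp
  moreover have "0 \<le> n gchoose j"
    unfolding gbinomial_prod_rev using assms
    by (auto intro!: divide_nonneg_pos prod_nonneg)
  ultimately show ?thesis by linarith
qed

lemma binom_tail:
  fixes n :: nat and k :: real
  assumes k0: "0 < k" and kn: "k \<le> real n"
  shows "(\<Sum>j\<in>{j::nat. real j \<le> k}. real (n choose j)) \<le> exp (k * ln (exp 1 * real n / k))"
proof -
  define q where "q = k / real n"
  have n0: "real n > 0" using k0 kn by linarith
  have q0: "0 < q" "q \<le> 1" using k0 kn n0 by (auto simp: q_def field_simps)
  have qk: "q powr k > 0" using q0 by simp
  have "(\<Sum>j\<in>{j::nat. real j \<le> k}. real (n choose j))
      \<le> (\<Sum>j\<in>{j::nat. real j \<le> k}. real (n choose j) * q ^ j / q powr k)"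
  proof (rule sum_mono)
    fix j assume "j \<in> {j::nat. real j \<le> k}"
    hence jk: "real j \<le> k" by simp
    have "q powr k \<le> q powr (real j)" using powr_mono'[OF jk] q0 by simp
    hence "q powr k \<le> q ^ j" using q0 by (simp add: powr_realpow)
    hence "1 \<le> q ^ j / q powr k" using qk by simp
    thus "real (n choose j) \<le> real (n choose j) * q ^ j / q powr k"
      using mult_left_mono[of 1 "q ^ j / q powr k" "real (n choose j)"] by simp
  qed
  also have "\<dots> = (\<Sum>j\<in>{j::nat. real j \<le> k} \<inter> {..n}. real (n choose j) * q ^ j / q powr k)"
    by (rule sum.mono_neutral_right) (auto simp: finite_nat_le_real)
  also have "\<dots> \<le> (\<Sum>j\<in>{..n}. real (n choose j) * q ^ j / q powr k)"
    by (rule sum_mono2) (use q0 in auto)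
  also have "\<dots> = (\<Sum>j\<le>n. real (n choose j) * q ^ j * 1 ^ (n - j)) / q powr k"
    by (simp add: sum_divide_distrib)
  also have "\<dots> = (q + 1) ^ n / q powr k" by (simp add: binomial_ring)
  also have "\<dots> \<le> exp q ^ n / q powr k"
    by (intro divide_right_mono power_mono) (use q0 in \<open>auto simp: add.commute\<close>)
  also have "exp q ^ n = exp k" using n0 by (simp add: q_def exp_of_nat_mult[symmetric])
  also have "exp k / q powr k = exp (k * ln (exp 1 * real n / k))"
  proof -
    have "q powr k = exp (k * ln q)" using q0 by (simp add: powr_def)
    moreover have "ln (exp 1 * real n / k) = 1 - ln q"
      using q0 n0 k0 by (simp add: q_def ln_div ln_mult)
    ultimately have "exp k / q powr k = exp (k - k * ln q)" by (simp add: exp_diff)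
    also have "k - k * ln q = k * ln (exp 1 * real n / k)"
      using \<open>ln (exp 1 * real n / k) = 1 - ln q\<close> by (simp only: right_diff_distrib mult_1_right)
    finally show ?thesis .
  qed
  finally show ?thesis .
qed

lemma dc:
  assumes "finite P" "finite Q" "\<forall>u v. adj u v \<longrightarrow> adj v u"
  shows "(\<Sum>x\<in>P. card (nbhd adj x \<inter> Q)) = (\<Sum>y\<in>Q. card (nbhd adj y \<inter> P))"
proof -
  have "\<And>x. card (nbhd adj x \<inter> Q) = (\<Sum>y\<in>Q. if adj x y then 1 else 0)"
  proof -
    fix x
    have "nbhd adj x \<inter> Q = {y\<in>Q. adj x y}" by (auto simp: nbhd_def)
    thus "card (nbhd adj x \<inter> Q) = (\<Sum>y\<in>Q. if adj x y then 1 else 0)"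
      using sum.inter_filter[OF assms(2), of "\<lambda>_. 1::nat" "adj x"] by simp
  qed
  moreover have "\<And>y. card (nbhd adj y \<inter> P) = (\<Sum>x\<in>P. if adj x y then 1 else 0)"
  proof -
    fix y
    have "nbhd adj y \<inter> P = {x\<in>P. adj x y}" using assms(3) by (auto simp: nbhd_def)
    thus "card (nbhd adj y \<inter> P) = (\<Sum>x\<in>P. if adj x y then 1 else 0)"
      using sum.inter_filter[OF assms(1), of "\<lambda>_. 1::nat" "\<lambda>x. adj x y"] by simp
  qed
  ultimately show ?thesis by (simp add: sum.swap[of _ P Q])
qed



locale L24 =
  fixes X Y :: "'v set" and adj :: "'v \<Rightarrow> 'v \<Rightarrow> bool"
    and \<delta> \<gamma> \<phi> :: real and dX dY a g :: nat and F' :: "'v set"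
  assumes ab: "approx_biregular X Y adj \<delta> dX dY"
  and \<delta>1: "\<delta> \<ge> 1" and \<gamma>2: "\<gamma> \<ge> 2" and dXb: "real dX \<ge> 2*\<gamma>" and dYb: "real dY \<ge> 2*\<gamma>"
  and ag: "a < g" and \<phi>1: "1 \<le> \<phi>" and \<phi>2: "\<phi> \<le> real dY/\<delta> - 1" and F'Y: "F' \<subseteq> Y"
begin

lemma bip: "bipartite X Y adj" using ab by (simp add: approx_biregular_def)
lemma finX: "finite X" using bip by (simp add: bipartite_def)
lemma finY: "finite Y" using bip by (simp add: bipartite_def)
lemma disj: "X \<inter> Y = {}" using bip by (simp add: bipartite_def)
lemma sym: "\<forall>u v. adj u v \<longrightarrow> adj v u" using bip by (simp add: bipartite_def)
lemma edge: "adj u v \<Longrightarrow> (u \<in> X \<and> v \<in> Y) \<or> (u \<in> Y \<and> v \<in> X)" using bip by (simp add: bipartite_def)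
lemma dYX: "dY \<le> dX" using ab by (simp add: approx_biregular_def)

lemma nb_X: "v \<in> X \<Longrightarrow> nbhd adj v \<subseteq> Y"
  using edge disj by (auto simp: nbhd_def)
lemma nb_Y: "v \<in> Y \<Longrightarrow> nbhd adj v \<subseteq> X"
  using edge disj by (auto simp: nbhd_def)
lemma nb_sub: "nbhd adj v \<subseteq> X \<union> Y"
  using edge by (auto simp: nbhd_def)
lemma nb_fin: "finite (nbhd adj v)"
  using nb_sub finX finY by (meson finite_UnI finite_subset)
lemma degX: "v \<in> X \<Longrightarrow> real dX \<le> real (deg adj v) \<and> real (deg adj v) \<le> \<delta> * real dX"
  using ab by (simp add: approx_biregular_def)
lemma degY: "v \<in> Y \<Longrightarrow> real dY / \<delta> \<le> real (deg adj v) \<and> real (deg adj v) \<le> real dY"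
  using ab by (simp add: approx_biregular_def)

lemma \<gamma>pos: "\<gamma> > 0" using \<gamma>2 by simp
lemma dXpos: "real dX > 0" using dXb \<gamma>2 by simp
lemma dYpos: "real dY > 0" using dYb \<gamma>2 by simp

lemma NS_X: "S \<subseteq> X \<Longrightarrow> NS adj S \<subseteq> Y" using nb_X by (auto simp: NS_def)
lemma NS_Y: "S \<subseteq> Y \<Longrightarrow> NS adj S \<subseteq> X" using nb_Y by (auto simp: NS_def)
lemma NS_fin: "finite S \<Longrightarrow> finite (NS adj S)" using nb_fin by (simp add: NS_def)
lemma NS_Un: "NS adj (S \<union> T) = NS adj S \<union> NS adj T" by (auto simp: NS_def)
lemma NS_mono: "S \<subseteq> T \<Longrightarrow> NS adj S \<subseteq> NS adj T" by (auto simp: NS_def)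

lemma card_NS_le:
  assumes "finite S" "\<forall>s\<in>S. real (deg adj s) \<le> D"
  shows "real (card (NS adj S)) \<le> real (card S) * D"
proof -
  have "card (NS adj S) \<le> (\<Sum>s\<in>S. card (nbhd adj s))"
    unfolding NS_def by (rule card_UN_le[OF assms(1)])
  hence "real (card (NS adj S)) \<le> (\<Sum>s\<in>S. real (deg adj s))"
    by (simp add: deg_def flip: of_nat_sum)
  also have "\<dots> \<le> (\<Sum>s\<in>S. D)" by (rule sum_mono) (use assms in auto)
  finally show ?thesis by simp
qed

lemma degin_le: "degin adj B v \<le> deg adj v"
  unfolding degin_def deg_def by (rule card_mono[OF nb_fin]) auto
lemma degin_mono: "B \<subseteq> C \<Longrightarrow> degin adj B v \<le> degin adj C v"
  unfolding degin_def by (rule card_mono) (use nb_fin in auto)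
lemma degin_split: "v \<in> Y \<Longrightarrow> deg adj v = degin adj B v + degin adj (X - B) v"
proof -
  assume v: "v \<in> Y"
  have "nbhd adj v = (nbhd adj v \<inter> B) \<union> (nbhd adj v \<inter> (X - B))" using nb_Y[OF v] by auto
  moreover have "card ((nbhd adj v \<inter> B) \<union> (nbhd adj v \<inter> (X - B)))
      = card (nbhd adj v \<inter> B) + card (nbhd adj v \<inter> (X - B))"
    by (rule card_Un_disjoint) (use nb_fin in auto)
  ultimately show ?thesis unfolding deg_def degin_def by simp
qed
lemma degin_diff: "deg adj v = degin adj B v + card (nbhd adj v - B)"
proof -
  have "nbhd adj v = (nbhd adj v \<inter> B) \<union> (nbhd adj v - B)" by auto
  moreover have "card ((nbhd adj v \<inter> B) \<union> (nbhd adj v - B))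
      = card (nbhd adj v \<inter> B) + card (nbhd adj v - B)"
    by (rule card_Un_disjoint) (use nb_fin in auto)
  ultimately show ?thesis unfolding deg_def degin_def by simp
qed

end


context L24 begin

definition "tt = real g - real a"
definition "ww = real g * real dY - real a * real dX"
definition "k1 = \<delta> * \<gamma> * ww / ((real dY - \<delta> * \<phi>) * real dX)"
definition "k2 = 2 * \<gamma> * ww / (real dX * real dY)"
definition "kk = 2 * \<gamma> * tt / real dX"
definition "U1 = NS adj F'"
definition "U2 = NS adj (NS adj (NS adj (NS adj F')))"
definition "F0 T0 = F' \<union> NS adj T0"
definition "S0' T0 = {u \<in> X. real (degin adj (F0 T0) u) \<ge> real (deg adj u) - real dX / \<gamma>}"
definition "S0 T0 W = S0' T0 - NS adj W"
definition "Fb T0 W = F0 T0 \<union> {y \<in> Y. real (degin adj (S0 T0 W) y) > real dY / \<gamma>}"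
definition "Fi T0 W Ts = Fb T0 W \<union> NS adj (\<Union>(set Ts))"
definition "Si T0 W Ts = {u \<in> S0 T0 W. real (degin adj (Fi T0 W Ts) u) \<ge>
    real (deg adj u) - real dX / (2 ^ length Ts * \<gamma>)}"
definition "Phi c = (case c of (T0, W, Ts) \<Rightarrow> (Fi T0 W Ts, Si T0 W Ts))"
definition "P1 = {T. T \<subseteq> U1 \<and> real (card T) \<le> k1}"
definition "P2 = {W. W \<subseteq> U2 \<and> real (card W) \<le> k2}"
definition "P3 = {T. T \<subseteq> U1 \<and> real (card T) \<le> kk}"
definition "Codes i = P1 \<times> P2 \<times> {Ts. set Ts \<subseteq> P3 \<and> length Ts = i}"
definition "GF = GsetF X adj \<phi> a g F'"
definition "Fs i = {p \<in> Phi ` Codes i. p \<in> Pow Y \<times> Pow X \<and>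
   (\<exists>A\<in>GF. approx_pair X Y adj (real dX / (2^i*\<gamma>)) (real dY/\<gamma>) (fst p) (snd p) A) \<and>
   (i < kappa dX \<longrightarrow> real (card (fst p)) < real g - tt / 2^i)}"

lemma S0_X: "S0 T0 W \<subseteq> X" by (auto simp: S0_def S0'_def)
lemma Si_S0: "Si T0 W Ts \<subseteq> S0 T0 W" by (auto simp: Si_def)

lemma pair_d:
  assumes v: "v \<in> Y - Fi T0 W Ts"
  shows "real (degin adj (X - Si T0 W Ts) v) \<ge> real (deg adj v) - real dY / \<gamma>"
proof -
  have "v \<notin> Fb T0 W" using v by (simp add: Fi_def)
  hence "real (degin adj (S0 T0 W) v) \<le> real dY / \<gamma>" using v by (auto simp: Fb_def)
  moreover have "degin adj (Si T0 W Ts) v \<le> degin adj (S0 T0 W) v"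
    by (rule degin_mono[OF Si_S0])
  moreover have "deg adj v = degin adj (Si T0 W Ts) v + degin adj (X - Si T0 W Ts) v"
    using v degin_split by auto
  ultimately show ?thesis by linarith
qed

lemma A_facts:
  assumes "A \<in> GF"
  shows "A \<subseteq> X" "NS adj A \<subseteq> Y" "clos X adj A \<subseteq> X" "finite (NS adj A)" "finite (clos X adj A)"
    "card (NS adj A) = g" "card (clos X adj A) = a" "\<forall>x\<in>clos X adj A. nbhd adj x \<subseteq> NS adj A"
    "F' \<subseteq> NS adj A" "clos X adj A \<subseteq> U1"
    "\<forall>y\<in>NS adj A - F'. real (degin adj (clos X adj A) y) \<le> \<phi>"
proof -
  have G: "A \<in> Gset X adj a g" and pa: "phi_approx X adj \<phi> F' A"
    using assms by (auto simp: GF_def GsetF_def)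
  show AX: "A \<subseteq> X" using G by (simp add: Gset_def)
  show GY: "NS adj A \<subseteq> Y" using NS_X[OF AX] .
  show "clos X adj A \<subseteq> X" by (auto simp: clos_def)
  show "finite (NS adj A)" using GY finY finite_subset by blast
  show "finite (clos X adj A)" using finX by (auto simp: clos_def)
  show "card (NS adj A) = g" "card (clos X adj A) = a" using G by (auto simp: Gset_def)
  show "\<forall>x\<in>clos X adj A. nbhd adj x \<subseteq> NS adj A" by (auto simp: clos_def)
  show "F' \<subseteq> NS adj A" "clos X adj A \<subseteq> U1" using pa by (auto simp: phi_approx_def U1_def)
  show "\<forall>y\<in>NS adj A - F'. real (degin adj (clos X adj A) y) \<le> \<phi>"
    using pa by (auto simp: phi_approx_def Nphi_def not_less)
qed

definition "Def A = (\<Sum>y\<in>NS adj A. degin adj (X - clos X adj A) y)"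

lemma Def_le:
  assumes "A \<in> GF"
  shows "real (Def A) \<le> ww" "(\<Sum>u\<in>X - clos X adj A. degin adj (NS adj A) u) = Def A"
proof -
  let ?G = "NS adj A" and ?H = "clos X adj A"
  note F = A_facts[OF assms]
  have s1: "(\<Sum>y\<in>?G. deg adj y) = (\<Sum>y\<in>?G. degin adj ?H y) + Def A"
    unfolding Def_def sum.distrib[symmetric]
    by (rule sum.cong) (use F(2) degin_split in auto)
  have "(\<Sum>y\<in>?G. degin adj ?H y) = (\<Sum>x\<in>?H. degin adj ?G x)"
    unfolding degin_def using dc[OF F(4) F(5) sym] by simp
  also have "\<dots> = (\<Sum>x\<in>?H. deg adj x)"
    by (rule sum.cong) (use F(8) in \<open>auto simp: degin_def deg_def Int_absorb2\<close>)
  finally have s2: "(\<Sum>y\<in>?G. degin adj ?H y) = (\<Sum>x\<in>?H. deg adj x)" .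
  have "real (\<Sum>y\<in>?G. deg adj y) \<le> real g * real dY"
  proof -
    have "real (\<Sum>y\<in>?G. deg adj y) = (\<Sum>y\<in>?G. real (deg adj y))" by simp
    also have "\<dots> \<le> (\<Sum>y\<in>?G. real dY)" by (rule sum_mono) (use F(2) degY in auto)
    finally show ?thesis using F(6) by simp
  qed
  moreover have "real a * real dX \<le> real (\<Sum>x\<in>?H. deg adj x)"
  proof -
    have "(\<Sum>x\<in>?H. real dX) \<le> (\<Sum>x\<in>?H. real (deg adj x))" by (rule sum_mono) (use F(3) degX in auto)
    thus ?thesis using F(7) by simp
  qed
  ultimately show "real (Def A) \<le> ww" using s1 s2 unfolding ww_def
    by (metis (no_types, lifting) add_diff_cancel_left' diff_mono of_nat_add)
  show "(\<Sum>u\<in>X - ?H. degin adj ?G u) = Def A"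
    unfolding Def_def degin_def using dc[OF _ F(4) sym, of "X - ?H"] finX by simp
qed

lemma cardE:
  assumes "A \<in> GF"
  shows "real (card (NS adj A - F')) * (real dY / \<delta> - \<phi>) \<le> ww"
proof -
  let ?G = "NS adj A" and ?H = "clos X adj A"
  note F = A_facts[OF assms]
  have "real (card (?G - F')) * (real dY / \<delta> - \<phi>) = (\<Sum>y\<in>?G - F'. (real dY / \<delta> - \<phi>))" by simp
  also have "\<dots> \<le> (\<Sum>y\<in>?G - F'. real (degin adj (X - ?H) y))"
  proof (rule sum_mono)
    fix y assume y: "y \<in> ?G - F'"
    hence "y \<in> Y" using F(2) by auto
    hence "deg adj y = degin adj ?H y + degin adj (X - ?H) y" "real dY / \<delta> \<le> real (deg adj y)"
      using degin_split degY by auto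
    thus "real dY / \<delta> - \<phi> \<le> real (degin adj (X - ?H) y)" using F(11) y by force
  qed
  also have "\<dots> \<le> (\<Sum>y\<in>?G. real (degin adj (X - ?H) y))"
    by (rule sum_mono2) (use F(4) in auto)
  also have "\<dots> = real (Def A)" by (simp add: Def_def)
  finally show ?thesis using Def_le(1)[OF assms] by linarith
qed

end


context L24 begin

definition "Inv i A c \<longleftrightarrow> c \<in> Codes i \<and> (case c of (T0, W, Ts) \<Rightarrow>
   Fi T0 W Ts \<subseteq> NS adj A \<and> (\<forall>x\<in>clos X adj A. x \<in> S0 T0 W \<and>
     real (degin adj (Fi T0 W Ts) x) \<ge> real (deg adj x) - real dX / (2^i * \<gamma>)))"

lemma Inv_valid:
  assumes "A \<in> GF" "Inv i A c"
  shows "approx_pair X Y adj (real dX / (2^i*\<gamma>)) (real dY/\<gamma>) (fst (Phi c)) (snd (Phi c)) A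
     \<and> Phi c \<in> Pow Y \<times> Pow X"
proof -
  obtain T0 W Ts where c: "c = (T0, W, Ts)" by (cases c) auto
  have len: "length Ts = i" using assms(2) c by (auto simp: Inv_def Codes_def)
  have inv: "Fi T0 W Ts \<subseteq> NS adj A" "\<forall>x\<in>clos X adj A. x \<in> S0 T0 W \<and>
     real (degin adj (Fi T0 W Ts) x) \<ge> real (deg adj x) - real dX / (2^i * \<gamma>)"
    using assms(2) c by (auto simp: Inv_def)
  have ph: "Phi c = (Fi T0 W Ts, Si T0 W Ts)" by (simp add: Phi_def c)
  have "clos X adj A \<subseteq> Si T0 W Ts" using inv(2) len by (auto simp: Si_def)
  moreover have "\<forall>u\<in>Si T0 W Ts. real (degin adj (Fi T0 W Ts) u) \<ge> real (deg adj u) - real dX / (2^i*\<gamma>)"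
    using len by (auto simp: Si_def)
  moreover have "\<forall>v\<in>Y - Fi T0 W Ts. real (degin adj (X - Si T0 W Ts) v) \<ge> real (deg adj v) - real dY/\<gamma>"
    using pair_d by blast
  moreover have "Fi T0 W Ts \<subseteq> Y" using inv(1) A_facts(2)[OF assms(1)] by auto
  moreover have "Si T0 W Ts \<subseteq> X" using Si_S0 S0_X by blast
  ultimately show ?thesis using inv(1) ph by (auto simp: approx_pair_def)
qed

lemma NS_UN: "\<Union>(nbhd adj ` T) = NS adj T" by (simp add: NS_def)

lemma F'_NS2: "F' \<subseteq> NS adj (NS adj F')"
proof
  fix y assume y: "y \<in> F'"
  hence "y \<in> Y" using F'Y by auto
  hence "real (deg adj y) \<ge> real dY / \<delta>" using degY by auto
  moreover have "real dY / \<delta> > 0" using dYpos \<delta>1 by simp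
  ultimately have "deg adj y > 0" by linarith
  hence "nbhd adj y \<noteq> {}" by (auto simp: deg_def)
  then obtain z where "adj y z" by (auto simp: nbhd_def)
  hence "z \<in> NS adj F'" "adj z y" using y sym by (auto simp: NS_def nbhd_def)
  thus "y \<in> NS adj (NS adj F')" by (auto simp: NS_def nbhd_def)
qed

lemma base:
  assumes AG: "A \<in> GF"
  shows "\<exists>c. Inv 0 A c"
proof -
  let ?G = "NS adj A" and ?H = "clos X adj A"
  note F = A_facts[OF AG]
  define Q where "Q = ?G - F'"
  have finQ: "finite Q" using F(4) by (simp add: Q_def)
  have tau: "real dX / \<gamma> \<ge> 0" using dXpos \<gamma>pos by simp
  obtain T0 where T0: "T0 \<subseteq> ?H" "finite T0"
    "real (card T0) * (real dX / \<gamma>) \<le> real (card Q) - real (card (Q - NS adj T0))"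
    "\<forall>x\<in>?H. real (card (nbhd adj x \<inter> (Q - NS adj T0))) \<le> real dX / \<gamma>"
    using greedy[OF finQ tau, of ?H "nbhd adj"] unfolding NS_UN by blast
  have NSH: "NS adj ?H \<subseteq> ?G" using F(8) by (auto simp: NS_def)
  have F0G: "F0 T0 \<subseteq> ?G" using F(9) NS_mono[OF T0(1)] NSH by (auto simp: F0_def)
  have Hdeg: "real (degin adj (F0 T0) x) \<ge> real (deg adj x) - real dX / \<gamma>" if x: "x \<in> ?H" for x
  proof -
    have "nbhd adj x - F0 T0 = nbhd adj x \<inter> (Q - NS adj T0)"
      using F(8) x by (auto simp: Q_def F0_def)
    thus ?thesis using T0(4) x degin_diff[of x "F0 T0"] by force
  qed
  have HS0': "?H \<subseteq> S0' T0" using Hdeg F(3) by (auto simp: S0'_def)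
  define R where "R = S0' T0 - ?H"
  have finR: "finite R" using finX by (auto simp: R_def S0'_def)
  have tau2: "real dY / \<gamma> \<ge> 0" using dYpos \<gamma>pos by simp
  obtain W where W: "W \<subseteq> Y - ?G" "finite W"
    "real (card W) * (real dY / \<gamma>) \<le> real (card R) - real (card (R - NS adj W))"
    "\<forall>v\<in>Y - ?G. real (card (nbhd adj v \<inter> (R - NS adj W))) \<le> real dY / \<gamma>"
    "\<forall>v\<in>W. nbhd adj v \<inter> R \<noteq> {}"
    using greedy[OF finR tau2, of "Y - ?G" "nbhd adj"] unfolding NS_UN by blast
  have Hadj: "v \<in> ?G" if "x \<in> ?H" "adj v x" for x v
    using that F(8) sym by (auto simp: nbhd_def)
  have HW: "?H \<inter> NS adj W = {}"
    using W(1) Hadj by (auto simp: NS_def nbhd_def)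
  have HS0: "?H \<subseteq> S0 T0 W" using HS0' HW by (auto simp: S0_def)
  have FbG: "Fb T0 W \<subseteq> ?G"
  proof
    fix y assume y: "y \<in> Fb T0 W"
    show "y \<in> ?G"
    proof (rule ccontr)
      assume nG: "y \<notin> ?G"
      hence "y \<notin> F0 T0" using F0G by auto
      hence yY: "y \<in> Y" and big: "real (degin adj (S0 T0 W) y) > real dY / \<gamma>"
        using y by (auto simp: Fb_def)
      have "nbhd adj y \<inter> S0 T0 W \<subseteq> nbhd adj y \<inter> (R - NS adj W)"
        using Hadj nG by (auto simp: S0_def R_def nbhd_def)
      hence "degin adj (S0 T0 W) y \<le> card (nbhd adj y \<inter> (R - NS adj W))"
        unfolding degin_def by (rule card_mono[OF finite_subset[OF _ nb_fin], rotated]) auto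
      thus False using W(4) yY nG big by force
    qed
  qed
  have FiG: "Fi T0 W [] \<subseteq> ?G" using FbG by (simp add: Fi_def NS_def)
  have Hdeg2: "\<forall>x\<in>?H. x \<in> S0 T0 W \<and> real (degin adj (Fi T0 W []) x) \<ge> real (deg adj x) - real dX / (2^0 * \<gamma>)"
  proof
    fix x assume x: "x \<in> ?H"
    have "degin adj (F0 T0) x \<le> degin adj (Fi T0 W []) x"
      by (rule degin_mono) (auto simp: Fi_def Fb_def)
    thus "x \<in> S0 T0 W \<and> real (degin adj (Fi T0 W []) x) \<ge> real (deg adj x) - real dX / (2^0 * \<gamma>)"
      using Hdeg[OF x] HS0 x by auto
  qed
  have cQ: "real (card T0) * real dX \<le> \<gamma> * real (card Q)"
  proof -
    have "real (card T0) * (real dX / \<gamma>) \<le> real (card Q)" using T0(3) by simp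
    thus ?thesis using \<gamma>pos by (simp add: field_simps)
  qed
  have cE: "real (card Q) * (real dY - \<delta> * \<phi>) \<le> \<delta> * ww"
  proof -
    have "real (card Q) * (real dY / \<delta> - \<phi>) \<le> ww" using cardE[OF AG] by (simp add: Q_def)
    hence "\<delta> * (real (card Q) * (real dY / \<delta> - \<phi>)) \<le> \<delta> * ww" using \<delta>1 by (simp add: mult_left_mono)
    moreover have "\<delta> * (real (card Q) * (real dY / \<delta> - \<phi>)) = real (card Q) * (real dY - \<delta> * \<phi>)"
      using \<delta>1 by (simp add: field_simps)
    ultimately show ?thesis by simp
  qed
  have pd: "real dY - \<delta> * \<phi> > 0"
  proof -
    have "\<delta> * \<phi> \<le> \<delta> * (real dY / \<delta> - 1)" using \<phi>2 \<delta>1 by (simp add: mult_left_mono)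
    also have "\<dots> = real dY - \<delta>" using \<delta>1 by (simp add: field_simps)
    finally show ?thesis using \<delta>1 by linarith
  qed
  have "real (card T0) * real dX * (real dY - \<delta> * \<phi>) \<le> \<gamma> * real (card Q) * (real dY - \<delta> * \<phi>)"
    using cQ pd by (simp add: mult_right_mono)
  also have "\<dots> \<le> \<gamma> * (\<delta> * ww)" using cE \<gamma>pos by (simp add: mult.assoc mult_left_mono)
  finally have "real (card T0) \<le> \<delta> * \<gamma> * ww / ((real dY - \<delta> * \<phi>) * real dX)"
    using pd dXpos by (simp add: field_simps)
  hence T0P1: "T0 \<in> P1" using T0(1) F(10) by (auto simp: P1_def k1_def)
  have Rdeg: "real dX - real dX / \<gamma> \<le> real (degin adj ?G u)" if u: "u \<in> R" for u
  proof -
    have "u \<in> X" "real (degin adj (F0 T0) u) \<ge> real (deg adj u) - real dX / \<gamma>"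
      using u by (auto simp: R_def S0'_def)
    moreover have "degin adj (F0 T0) u \<le> degin adj ?G u" by (rule degin_mono[OF F0G])
    ultimately show ?thesis using degX by force
  qed
  have "real (card R) * (real dX - real dX / \<gamma>) \<le> (\<Sum>u\<in>R. real (degin adj ?G u))"
    using sum_mono[of R "\<lambda>_. real dX - real dX / \<gamma>", OF Rdeg] by simp
  also have "\<dots> \<le> (\<Sum>u\<in>X - ?H. real (degin adj ?G u))"
    by (rule sum_mono2) (use finX in \<open>auto simp: R_def S0'_def\<close>)
  also have "\<dots> = real (Def A)" using Def_le(2)[OF AG] by (metis of_nat_sum)
  also have "\<dots> \<le> ww" using Def_le(1)[OF AG] .
  finally have cR: "real (card R) * (real dX - real dX / \<gamma>) \<le> ww" .
  have "real dX - real dX / \<gamma> \<ge> real dX / 2"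
  proof -
    have "real dX / \<gamma> \<le> real dX / 2" using \<gamma>2 dXpos by (intro divide_left_mono) auto
    thus ?thesis by linarith
  qed
  hence cR2: "real (card R) * real dX \<le> 2 * ww"
    using cR mult_left_mono[of "real dX / 2" "real dX - real dX / \<gamma>" "real (card R)"] by linarith
  have cW: "real (card W) * real dY \<le> \<gamma> * real (card R)"
  proof -
    have "real (card W) * (real dY / \<gamma>) \<le> real (card R)" using W(3) by simp
    thus ?thesis using \<gamma>pos by (simp add: field_simps)
  qed
  have "real (card W) * real dY * real dX \<le> \<gamma> * real (card R) * real dX"
    using cW dXpos by (simp add: mult_right_mono)
  also have "\<dots> \<le> \<gamma> * (2 * ww)" using cR2 \<gamma>pos by (simp add: mult.assoc mult_left_mono)
  finally have cWk: "real (card W) \<le> k2"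
    using dXpos dYpos by (simp add: k2_def field_simps)
  have WU2: "W \<subseteq> U2"
  proof
    fix v assume v: "v \<in> W"
    then obtain u where u: "u \<in> R" "adj v u" using W(5) by (auto simp: nbhd_def)
    have uX: "u \<in> X" and ud: "real (degin adj (F0 T0) u) \<ge> real (deg adj u) - real dX / \<gamma>"
      using u by (auto simp: R_def S0'_def)
    have "real dX / \<gamma> < real dX"
      using \<gamma>2 dXpos by (simp add: divide_less_eq)
    hence "degin adj (F0 T0) u > 0" using ud degX[OF uX] by linarith
    then obtain y where y: "y \<in> F0 T0" "adj u y"
      by (auto simp: degin_def nbhd_def card_gt_0_iff)
    have "y \<in> NS adj (NS adj F')"
    proof (cases "y \<in> F'")
      case True thus ?thesis using F'_NS2 by auto
    next
      case False
      then obtain x where "x \<in> T0" "adj x y" using y(1) by (auto simp: F0_def NS_def nbhd_def)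
      moreover have "x \<in> NS adj F'" using \<open>x \<in> T0\<close> T0(1) F(10) by (auto simp: U1_def)
      ultimately show ?thesis by (auto simp: NS_def nbhd_def)
    qed
    hence "u \<in> NS adj (NS adj (NS adj F'))" using y(2) sym unfolding NS_def nbhd_def by blast
    thus "v \<in> U2" using u(2) sym unfolding NS_def nbhd_def U2_def by blast
  qed
  have "(T0, W, []) \<in> Codes 0" using T0P1 WU2 cWk by (auto simp: Codes_def P2_def)
  thus ?thesis using FiG Hdeg2 by (auto simp: Inv_def)
qed

end


context L24 begin

lemma tt_pos: "tt > 0" using ag by (simp add: tt_def)

lemma step:
  assumes AG: "A \<in> GF" and I: "Inv i A c"
    and big: "real (card (fst (Phi c))) \<ge> real g - tt / 2^i"
  shows "\<exists>c'. Inv (Suc i) A c'"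
proof -
  let ?G = "NS adj A" and ?H = "clos X adj A"
  note F = A_facts[OF AG]
  obtain T0 W Ts where c: "c = (T0, W, Ts)" by (cases c) auto
  have cc: "(T0, W, Ts) \<in> Codes i" and FiG: "Fi T0 W Ts \<subseteq> ?G"
    and Hx: "\<forall>x\<in>?H. x \<in> S0 T0 W" using I c by (auto simp: Inv_def)
  have len: "length Ts = i" "set Ts \<subseteq> P3" using cc by (auto simp: Codes_def)
  define Q where "Q = ?G - Fi T0 W Ts"
  have finQ: "finite Q" using F(4) by (simp add: Q_def)
  have "card Q = card ?G - card (Fi T0 W Ts)"
    unfolding Q_def by (rule card_Diff_subset[OF finite_subset[OF FiG F(4)] FiG])
  moreover have "card (Fi T0 W Ts) \<le> card ?G" by (rule card_mono[OF F(4) FiG])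
  ultimately have "real (card Q) = real g - real (card (Fi T0 W Ts))" using F(6) by simp
  hence cQ: "real (card Q) \<le> tt / 2^i" using big c by (simp add: Phi_def)
  define \<tau> where "\<tau> = real dX / (2 ^ Suc i * \<gamma>)"
  have tau: "\<tau> > 0" using dXpos \<gamma>pos by (simp add: \<tau>_def)
  obtain T' where T': "T' \<subseteq> ?H" "finite T'"
    "real (card T') * \<tau> \<le> real (card Q) - real (card (Q - NS adj T'))"
    "\<forall>x\<in>?H. real (card (nbhd adj x \<inter> (Q - NS adj T'))) \<le> \<tau>"
    using greedy[OF finQ less_imp_le[OF tau], of ?H "nbhd adj"] unfolding NS_UN by blast
  have FiE: "Fi T0 W (Ts @ [T']) = Fi T0 W Ts \<union> NS adj T'"
    by (auto simp: Fi_def NS_def)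
  have NSH: "NS adj ?H \<subseteq> ?G" using F(8) by (auto simp: NS_def)
  have FiG': "Fi T0 W (Ts @ [T']) \<subseteq> ?G" using FiE FiG NS_mono[OF T'(1)] NSH by auto
  have Hdeg: "\<forall>x\<in>?H. x \<in> S0 T0 W \<and>
      real (degin adj (Fi T0 W (Ts @ [T'])) x) \<ge> real (deg adj x) - real dX / (2^Suc i * \<gamma>)"
  proof
    fix x assume x: "x \<in> ?H"
    have "nbhd adj x - Fi T0 W (Ts @ [T']) = nbhd adj x \<inter> (Q - NS adj T')"
      using F(8) x FiE by (auto simp: Q_def)
    hence "real (degin adj (Fi T0 W (Ts @ [T'])) x) \<ge> real (deg adj x) - \<tau>"
      using T'(4) x degin_diff[of x "Fi T0 W (Ts @ [T'])"] by force
    thus "x \<in> S0 T0 W \<and> real (degin adj (Fi T0 W (Ts @ [T'])) x) \<ge> real (deg adj x) - real dX / (2^Suc i * \<gamma>)"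
      using Hx x by (simp add: \<tau>_def)
  qed
  have "real (card T') * \<tau> \<le> tt / 2^i" using T'(3) cQ by linarith
  hence "real (card T') * \<tau> * (2 ^ Suc i * \<gamma> / real dX) \<le> tt / 2^i * (2 ^ Suc i * \<gamma> / real dX)"
    using \<gamma>pos dXpos by (intro mult_right_mono) auto
  moreover have "real (card T') * \<tau> * (2 ^ Suc i * \<gamma> / real dX) = real (card T')"
    using \<gamma>pos dXpos by (simp add: \<tau>_def field_simps)
  moreover have "tt / 2^i * (2 ^ Suc i * \<gamma> / real dX) = kk"
    by (simp add: kk_def field_simps)
  ultimately have "real (card T') \<le> kk" by simp
  hence "T' \<in> P3" using T'(1) F(10) by (auto simp: P3_def)
  hence "(T0, W, Ts @ [T']) \<in> Codes (Suc i)" using cc len by (auto simp: Codes_def)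
  thus ?thesis using FiG' Hdeg by (auto simp: Inv_def)
qed

lemma cover:
  assumes AG: "A \<in> GF"
  shows "i \<le> kappa dX \<Longrightarrow> (\<exists>j<i. \<exists>p\<in>Fs j. approx_pair X Y adj (real dX / (2^j*\<gamma>)) (real dY/\<gamma>) (fst p) (snd p) A)
     \<or> (\<exists>c. Inv i A c)"
proof (induction i)
  case 0 thus ?case using base[OF AG] by auto
next
  case (Suc i)
  hence "i \<le> kappa dX" "i < kappa dX" by auto
  from Suc.IH[OF this(1)] show ?case
  proof
    assume "\<exists>j<i. \<exists>p\<in>Fs j. approx_pair X Y adj (real dX / (2^j*\<gamma>)) (real dY/\<gamma>) (fst p) (snd p) A"
    thus ?case using less_SucI by blast
  next
    assume "\<exists>c. Inv i A c"
    then obtain c where c: "Inv i A c" by blast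
    show ?case
    proof (cases "real (card (fst (Phi c))) < real g - tt / 2^i")
      case True
      have "Phi c \<in> Fs i" using Inv_valid[OF AG c] c True AG
        by (auto simp: Fs_def Inv_def)
      thus ?thesis using Inv_valid[OF AG c] by blast
    next
      case False
      thus ?thesis using step[OF AG c] by force
    qed
  qed
qed

lemma cover_final:
  assumes AG: "A \<in> GF"
  shows "\<exists>i\<le>kappa dX. \<exists>p\<in>Fs i. approx_pair X Y adj (real dX / (2^i*\<gamma>)) (real dY/\<gamma>) (fst p) (snd p) A"
proof -
  from cover[OF AG order_refl] show ?thesis
  proof
    assume "\<exists>j<kappa dX. \<exists>p\<in>Fs j. approx_pair X Y adj (real dX / (2^j*\<gamma>)) (real dY/\<gamma>) (fst p) (snd p) A"
    thus ?thesis by (meson less_imp_le)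
  next
    assume "\<exists>c. Inv (kappa dX) A c"
    then obtain c where c: "Inv (kappa dX) A c" by blast
    have "Phi c \<in> Fs (kappa dX)" using Inv_valid[OF AG c] c AG by (auto simp: Fs_def Inv_def)
    thus ?thesis using Inv_valid[OF AG c] by blast
  qed
qed

end


context L24 begin

lemma finF': "finite F'" using F'Y finY finite_subset by blast
lemma finU1: "finite U1" unfolding U1_def by (intro NS_fin finF')
lemma finU2: "finite U2" unfolding U2_def by (intro NS_fin finF')
lemma finP1: "finite P1" using finU1 by (auto simp: P1_def)
lemma finP2: "finite P2" using finU2 by (auto simp: P2_def)
lemma finP3: "finite P3" using finU1 by (auto simp: P3_def)

lemma card_Codes: "card (Codes i) = card P1 * card P2 * card P3 ^ i" "finite (Codes i)"
  using finP1 finP2 finP3 finite_lists_length_eq[OF finP3, of i]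
  by (auto simp: Codes_def card_cartesian_product card_lists_length_eq)

lemma card_Fs: "card (Fs i) \<le> card (Codes i)"
proof -
  have "Fs i \<subseteq> Phi ` Codes i" by (auto simp: Fs_def)
  hence "card (Fs i) \<le> card (Phi ` Codes i)" using card_Codes(2) by (intro card_mono) auto
  also have "\<dots> \<le> card (Codes i)" by (rule card_image_le[OF card_Codes(2)])
  finally show ?thesis .
qed

abbreviation "n2 \<equiv> \<delta>^2 * (real dX)^2 * (real dY)^2 * real g"

lemma ww_le: "ww \<le> real g * real dY" by (simp add: ww_def)

lemma k2_le: "k2 \<le> real g"
proof -
  have "2 * \<gamma> * ww \<le> 2 * \<gamma> * (real g * real dY)" using ww_le \<gamma>pos by simp
  also have "\<dots> \<le> real dX * (real g * real dY)" using dXb by (intro mult_right_mono) auto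
  finally show ?thesis using dXpos dYpos by (simp add: k2_def field_simps)
qed

lemma g_le_n2: "real g \<le> n2"
proof -
  have a1: "1 \<le> \<delta>^2" using \<delta>1 by (simp add: one_le_power)
  have a2: "1 \<le> (real dX)^2" using dXb \<gamma>2 by (simp add: one_le_power)
  have a3: "1 \<le> (real dY)^2" using dYb \<gamma>2 by (simp add: one_le_power)
  have "1 * 1 \<le> \<delta>^2 * (real dX)^2" by (rule mult_mono[OF a1 a2]) auto
  hence "1 * 1 \<le> \<delta>^2 * (real dX)^2 * (real dY)^2" by (intro mult_mono[OF _ a3]) auto
  thus ?thesis using mult_right_mono[of 1 _ "real g"] by simp
qed

lemma B1_nonneg: "0 \<le> binom_le (real dY * real g) k1"
  unfolding binom_le_def
proof (intro sum_nonneg)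
  fix j
  have "real (dY * g choose j) = real (dY * g) gchoose j" by (rule binomial_gbinomial)
  thus "0 \<le> (real dY * real g) gchoose j" by (metis of_nat_0_le_iff of_nat_mult)
qed

lemma B2_nonneg: "0 \<le> binom_le n2 k2"
  unfolding binom_le_def
proof (intro sum_nonneg)
  fix j assume "j \<in> {j::nat. real j \<le> k2}"
  hence "real j \<le> n2 + 1" using k2_le g_le_n2 by simp
  thus "0 \<le> n2 gchoose j" using choose_le_gchoose[of 0 n2 j] g_le_n2 by simp
qed

context
  assumes F'g: "card F' \<le> g"
begin

lemma cardU1: "card U1 \<le> dY * g"
proof -
  have "real (card U1) \<le> real (card F') * real dY"
    unfolding U1_def using finF' F'Y degY by (intro card_NS_le) auto
  also have "\<dots> \<le> real g * real dY" using F'g by (intro mult_right_mono) auto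
  finally show ?thesis by (simp only: of_nat_mult[symmetric] of_nat_le_iff mult.commute)
qed

lemma cardU2: "real (card U2) \<le> n2"
proof -
  let ?N1 = "NS adj F'" let ?N2 = "NS adj ?N1" let ?N3 = "NS adj ?N2"
  have s1: "?N1 \<subseteq> X" using NS_Y[OF F'Y] .
  have s2: "?N2 \<subseteq> Y" using NS_X[OF s1] .
  have s3: "?N3 \<subseteq> X" using NS_Y[OF s2] .
  have f1: "finite ?N1" "finite ?N2" "finite ?N3" using finF' by (auto intro!: NS_fin)
  have c1: "real (card ?N1) \<le> real g * real dY"
    using cardU1 unfolding U1_def by (metis mult.commute of_nat_le_iff of_nat_mult)
  have c2: "real (card ?N2) \<le> real (card ?N1) * (\<delta> * real dX)"
    using f1 s1 degX by (intro card_NS_le) auto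
  have c3: "real (card ?N3) \<le> real (card ?N2) * real dY"
    using f1 s2 degY by (intro card_NS_le) auto
  have c4: "real (card U2) \<le> real (card ?N3) * (\<delta> * real dX)"
    unfolding U2_def using f1 s3 degX by (intro card_NS_le) auto
  have p: "\<delta> * real dX \<ge> 0" "real dY \<ge> 0" using \<delta>1 by auto
  have "real (card ?N2) \<le> real g * real dY * (\<delta> * real dX)"
    using c2 mult_right_mono[OF c1 p(1)] by linarith
  hence "real (card ?N3) \<le> real g * real dY * (\<delta> * real dX) * real dY"
    using c3 mult_right_mono[OF _ p(2)] by (meson order_trans)
  hence "real (card U2) \<le> real g * real dY * (\<delta> * real dX) * real dY * (\<delta> * real dX)"
    using c4 mult_right_mono[OF _ p(1)] by (meson order_trans)
  thus ?thesis by (simp add: power2_eq_square algebra_simps)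
qed

lemma P1_bound: "real (card P1) \<le> binom_le (real dY * real g) k1"
proof -
  have "card P1 = (\<Sum>j\<in>{j::nat. real j \<le> k1}. card U1 choose j)"
    unfolding P1_def by (rule card_subsets_le[OF finU1])
  also have "\<dots> \<le> (\<Sum>j\<in>{j::nat. real j \<le> k1}. dY * g choose j)"
    by (intro sum_mono binomial_right_mono cardU1)
  finally have "real (card P1) \<le> (\<Sum>j\<in>{j::nat. real j \<le> k1}. real (dY * g choose j))"
    unfolding of_nat_sum[symmetric] of_nat_le_iff .
  also have "\<dots> = binom_le (real dY * real g) k1"
    unfolding binom_le_def
  proof (intro sum.cong refl)
    fix j
    have "real (dY * g choose j) = real (dY * g) gchoose j" by (rule binomial_gbinomial)
    thus "real (dY * g choose j) = (real dY * real g) gchoose j" by simp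
  qed
  finally show ?thesis .
qed

lemma P2_bound: "real (card P2) \<le> binom_le n2 k2"
proof -
  have "card P2 = (\<Sum>j\<in>{j::nat. real j \<le> k2}. card U2 choose j)"
    unfolding P2_def by (rule card_subsets_le[OF finU2])
  hence "real (card P2) = (\<Sum>j\<in>{j::nat. real j \<le> k2}. real (card U2 choose j))" by simp
  also have "\<dots> \<le> (\<Sum>j\<in>{j::nat. real j \<le> k2}. n2 gchoose j)"
  proof (rule sum_mono)
    fix j assume "j \<in> {j::nat. real j \<le> k2}"
    hence "real j \<le> n2 + 1" using k2_le g_le_n2 by simp
    thus "real (card U2 choose j) \<le> n2 gchoose j" using choose_le_gchoose cardU2 by blast
  qed
  finally show ?thesis by (simp add: binom_le_def)
qed

lemma P3_bound: "real (card P3) \<le> exp (kk * ln (real g * (real dX)^2 / tt))"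
proof -
  have "card P3 = (\<Sum>j\<in>{j::nat. real j \<le> kk}. card U1 choose j)"
    unfolding P3_def by (rule card_subsets_le[OF finU1])
  also have "\<dots> \<le> (\<Sum>j\<in>{j::nat. real j \<le> kk}. dY * g choose j)"
    by (intro sum_mono binomial_right_mono cardU1)
  finally have "real (card P3) \<le> (\<Sum>j\<in>{j::nat. real j \<le> kk}. real (dY * g choose j))"
    unfolding of_nat_sum[symmetric] of_nat_le_iff .
  have kk0: "kk > 0" using tt_pos \<gamma>pos dXpos by (simp add: kk_def)
  have ttg: "tt \<le> real g" by (simp add: tt_def)
  have "kk \<le> tt"
  proof -
    have "2 * \<gamma> * tt \<le> real dX * tt" using dXb tt_pos by (intro mult_right_mono) auto
    thus ?thesis using dXpos by (simp add: kk_def field_simps)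
  qed
  moreover have "real g \<le> real (dY * g)" using dYpos by (simp add: mult_le_cancel_right1)
  ultimately have kkn: "kk \<le> real (dY * g)" using ttg by linarith
  note bt = binom_tail[OF kk0 kkn]
  have "exp 1 * real (dY * g) / kk \<le> real g * (real dX)^2 / tt"
  proof -
    have "exp 1 \<le> (3::real)" using exp_le by simp
    have "exp 1 * real dY \<le> 3 * real dX"
      using dYX \<open>exp 1 \<le> 3\<close> by (intro mult_mono) auto
    also have "\<dots> \<le> 2 * \<gamma> * real dX" using \<gamma>2 by (intro mult_right_mono) auto
    finally have e: "exp 1 * real dY \<le> 2 * \<gamma> * real dX" .
    have "exp 1 * real (dY * g) / kk = exp 1 * real dY * real g * real dX / (2 * \<gamma> * tt)"
      using dXpos by (simp add: kk_def field_simps)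
    also have "\<dots> \<le> 2 * \<gamma> * real dX * real g * real dX / (2 * \<gamma> * tt)"
      using e tt_pos \<gamma>pos dXpos by (intro divide_right_mono mult_right_mono) auto
    also have "\<dots> = real g * (real dX)^2 / tt" using \<gamma>pos by (simp add: power2_eq_square field_simps)
    finally show ?thesis .
  qed
  moreover have "exp 1 * real (dY * g) / kk > 0" using kk0 kkn by simp
  ultimately have "ln (exp 1 * real (dY * g) / kk) \<le> ln (real g * (real dX)^2 / tt)" by simp
  hence "exp (kk * ln (exp 1 * real (dY * g) / kk)) \<le> exp (kk * ln (real g * (real dX)^2 / tt))"
    using kk0 by simp
  thus ?thesis using bt \<open>real (card P3) \<le> _\<close> by linarith
qed

lemma count_bound:
  "real (card (Fs i)) \<le> binom_le (real dY * real g) k1 * binom_le n2 k2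
     * exp (2 * (real i * tt * \<gamma> * ln (real g * (real dX)^2 / tt) / real dX))"
proof -
  let ?L = "ln (real g * (real dX)^2 / tt)"
  have "real (card (Fs i)) \<le> real (card P1) * real (card P2) * real (card P3) ^ i"
  proof -
    have "card (Fs i) \<le> card P1 * card P2 * card P3 ^ i" using card_Fs[of i] card_Codes(1)[of i] by simp
    hence "real (card (Fs i)) \<le> real (card P1 * card P2 * card P3 ^ i)" by (simp only: of_nat_le_iff)
    thus ?thesis by simp
  qed
  also have "\<dots> \<le> binom_le (real dY * real g) k1 * binom_le n2 k2 * exp (kk * ?L) ^ i"
    by (intro mult_mono power_mono P1_bound P2_bound P3_bound) (auto simp: B1_nonneg B2_nonneg)
  also have "exp (kk * ?L) ^ i = exp (2 * (real i * tt * \<gamma> * ?L / real dX))"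
    by (simp add: exp_of_nat_mult[symmetric] kk_def)
  finally show ?thesis .
qed

end

lemma count_final:
  "real (card (Fs i)) \<le> binom_le (real dY * real g) k1 * binom_le n2 k2
     * exp (2 * (real i * tt * \<gamma> * ln (real g * (real dX)^2 / tt) / real dX))"
proof (cases "GF = {}")
  case True
  hence "Fs i = {}" by (auto simp: Fs_def)
  thus ?thesis using B1_nonneg B2_nonneg by simp
next
  case False
  then obtain A where "A \<in> GF" by auto
  hence "card F' \<le> g" using A_facts[of A] card_mono by metis
  thus ?thesis by (rule count_bound)
qed

end


theorem lemma2p4:
  "\<exists>\<gamma>0::real. \<forall>\<gamma>\<ge>\<gamma>0. \<forall>\<delta>::real. \<delta> \<ge> 1 \<longrightarrow>
   (\<exists>(C::real) (d0::nat). \<forall>(dX::nat) (dY::nat) (X::'v set) Y adj (a::nat) (g::nat) (\<phi>::real) (F'::'v set).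
     d0 \<le> dY \<longrightarrow> dY \<le> dX \<longrightarrow>
     approx_biregular X Y adj \<delta> dX dY \<longrightarrow>
     a < g \<longrightarrow>
     1 \<le> \<phi> \<longrightarrow> \<phi> \<le> real dY / \<delta> - 1 \<longrightarrow>
     F' \<subseteq> Y \<longrightarrow>
     (let t = real g - real a; w = real g * real dY - real a * real dX in
      \<exists>Fs :: nat \<Rightarrow> ('v set \<times> 'v set) set.
        (\<forall>i\<le>kappa dX.
           Fs i \<subseteq> Pow Y \<times> Pow X \<and>
           real (card (Fs i)) \<le>
             binom_le (real dY * real g) (\<delta> * \<gamma> * w / ((real dY - \<delta> * \<phi>) * real dX))
             * binom_le (\<delta>^2 * (real dX)^2 * (real dY)^2 * real g) (2 * \<gamma> * w / (real dX * real dY))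
             * exp (C * (real i * t * \<gamma> * ln (real g * (real dX)^2 / t) / real dX)) \<and>
           (\<forall>(F, S)\<in>Fs i.
              (\<exists>A\<in>GsetF X adj \<phi> a g F'.
                 approx_pair X Y adj (real dX / (2^i * \<gamma>)) (real dY / \<gamma>) F S A) \<and>
              (i < kappa dX \<longrightarrow> real (card F) < real g - t / 2^i))) \<and>
        (\<forall>A\<in>GsetF X adj \<phi> a g F'. \<exists>i\<le>kappa dX. \<exists>(F, S)\<in>Fs i.
            approx_pair X Y adj (real dX / (2^i * \<gamma>)) (real dY / \<gamma>) F S A)))"
proof (rule exI[of _ 2], intro allI impI)
  fix \<gamma> \<delta> :: real
  assume \<gamma>: "2 \<le> \<gamma>" and \<delta>: "1 \<le> \<delta>"
  show "\<exists>(C::real) (d0::nat). \<forall>(dX::nat) (dY::nat) (X::'v set) Y adj (a::nat) (g::nat) (\<phi>::real) (F'::'v set).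
     d0 \<le> dY \<longrightarrow> dY \<le> dX \<longrightarrow>
     approx_biregular X Y adj \<delta> dX dY \<longrightarrow>
     a < g \<longrightarrow>
     1 \<le> \<phi> \<longrightarrow> \<phi> \<le> real dY / \<delta> - 1 \<longrightarrow>
     F' \<subseteq> Y \<longrightarrow>
     (let t = real g - real a; w = real g * real dY - real a * real dX in
      \<exists>Fs :: nat \<Rightarrow> ('v set \<times> 'v set) set.
        (\<forall>i\<le>kappa dX.
           Fs i \<subseteq> Pow Y \<times> Pow X \<and>
           real (card (Fs i)) \<le>
             binom_le (real dY * real g) (\<delta> * \<gamma> * w / ((real dY - \<delta> * \<phi>) * real dX))
             * binom_le (\<delta>^2 * (real dX)^2 * (real dY)^2 * real g) (2 * \<gamma> * w / (real dX * real dY))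
             * exp (C * (real i * t * \<gamma> * ln (real g * (real dX)^2 / t) / real dX)) \<and>
           (\<forall>(F, S)\<in>Fs i.
              (\<exists>A\<in>GsetF X adj \<phi> a g F'.
                 approx_pair X Y adj (real dX / (2^i * \<gamma>)) (real dY / \<gamma>) F S A) \<and>
              (i < kappa dX \<longrightarrow> real (card F) < real g - t / 2^i))) \<and>
        (\<forall>A\<in>GsetF X adj \<phi> a g F'. \<exists>i\<le>kappa dX. \<exists>(F, S)\<in>Fs i.
            approx_pair X Y adj (real dX / (2^i * \<gamma>)) (real dY / \<gamma>) F S A))"
  proof (rule exI[of _ 2], rule exI[of _ "nat \<lceil>2*\<gamma>\<rceil>"], intro allI impI)
    fix dX dY :: nat and X Y :: "'v set" and adj and a g :: nat and \<phi> :: real and F' :: "'v set"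
    assume h: "nat \<lceil>2*\<gamma>\<rceil> \<le> dY" "dY \<le> dX" "approx_biregular X Y adj \<delta> dX dY" "a < g"
      "1 \<le> \<phi>" "\<phi> \<le> real dY / \<delta> - 1" "F' \<subseteq> Y"
    have dYb: "real dY \<ge> 2 * \<gamma>" using h(1) by linarith
    have dXb: "real dX \<ge> 2 * \<gamma>" using dYb h(2) by linarith
    interpret L: L24 X Y adj \<delta> \<gamma> \<phi> dX dY a g F'
      by unfold_locales (use h \<gamma> \<delta> dYb dXb in auto)
    show "let t = real g - real a; w = real g * real dY - real a * real dX in
      \<exists>Fs :: nat \<Rightarrow> ('v set \<times> 'v set) set.
        (\<forall>i\<le>kappa dX.
           Fs i \<subseteq> Pow Y \<times> Pow X \<and>
           real (card (Fs i)) \<le>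
             binom_le (real dY * real g) (\<delta> * \<gamma> * w / ((real dY - \<delta> * \<phi>) * real dX))
             * binom_le (\<delta>^2 * (real dX)^2 * (real dY)^2 * real g) (2 * \<gamma> * w / (real dX * real dY))
             * exp (2 * (real i * t * \<gamma> * ln (real g * (real dX)^2 / t) / real dX)) \<and>
           (\<forall>(F, S)\<in>Fs i.
              (\<exists>A\<in>GsetF X adj \<phi> a g F'.
                 approx_pair X Y adj (real dX / (2^i * \<gamma>)) (real dY / \<gamma>) F S A) \<and>
              (i < kappa dX \<longrightarrow> real (card F) < real g - t / 2^i))) \<and>
        (\<forall>A\<in>GsetF X adj \<phi> a g F'. \<exists>i\<le>kappa dX. \<exists>(F, S)\<in>Fs i.
            approx_pair X Y adj (real dX / (2^i * \<gamma>)) (real dY / \<gamma>) F S A)"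
      unfolding Let_def
    proof (rule exI[of _ L.Fs], intro conjI allI impI ballI)
      fix i assume "i \<le> kappa dX"
      show "L.Fs i \<subseteq> Pow Y \<times> Pow X" by (auto simp: L.Fs_def)
      show "real (card (L.Fs i)) \<le>
             binom_le (real dY * real g) (\<delta> * \<gamma> * (real g * real dY - real a * real dX) / ((real dY - \<delta> * \<phi>) * real dX))
             * binom_le (\<delta>^2 * (real dX)^2 * (real dY)^2 * real g) (2 * \<gamma> * (real g * real dY - real a * real dX) / (real dX * real dY))
             * exp (2 * (real i * (real g - real a) * \<gamma> * ln (real g * (real dX)^2 / (real g - real a)) / real dX))"
        using L.count_final[of i] by (simp add: L.tt_def L.ww_def L.k1_def L.k2_def)
    next
      fix i p assume "p \<in> L.Fs i"
      thus "case p of (F, S) \<Rightarrow> (\<exists>A\<in>GsetF X adj \<phi> a g F'.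
                 approx_pair X Y adj (real dX / (2^i * \<gamma>)) (real dY / \<gamma>) F S A) \<and>
              (i < kappa dX \<longrightarrow> real (card F) < real g - (real g - real a) / 2^i)"
        by (cases p) (auto simp: L.Fs_def L.GF_def L.tt_def)
    next
      fix A assume "A \<in> GsetF X adj \<phi> a g F'"
      hence "A \<in> L.GF" by (simp add: L.GF_def)
      from L.cover_final[OF this] show "\<exists>i\<le>kappa dX. \<exists>(F, S)\<in>L.Fs i.
            approx_pair X Y adj (real dX / (2^i * \<gamma>)) (real dY / \<gamma>) F S A"
        by (metis (no_types, lifting) case_prod_beta)
    qed
  qed
qed


end
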